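(* Let $b>0$ and let $f:(0,b)\to\mathbb{R}$ be real analytic and not identically zero. Let $\mathcal I=\{x\in(0,b):f(x)=0\}$. Assume that: (1) as $x\to b$ we have $\kappa(f,x)\to\infty$, and for every sequence $x_j\in(0,b)$ with $x_j\to0$ and $\mathrm{dist}(x_j,\mathcal I)\to0$ we have $\kappa(f,x_j)\to\infty$; (2) both as $x\to0$ and as $x\to b$ we have $\limsup|H(f,x)|\leq C$ for some constant $C>0$, where $H(f,x)=\frac{x^2f(x)f''(x)}{f(x)^2+x^2f'(x)^2}$. The part of this hypothesis concerning $x\to0$ (resp. $x\to b$) is automatically satisfied if $f$ admits an analytic extension to $(-\epsilon,b)$ (resp. $(0,b+\epsilon)$) for some $\epsilon>0$. Then $f$ is amenable.
   Context: Relative distance on $\mathbb{R}$: $\mathrm{dist}(x,y)=0$ if $x=y=0$, $\mathrm{dist}(x,y)=|\log(y/x)|$ if $xy>0$, and $\mathrm{dist}(x,y)=\infty$ otherwise; for a set $S$, $\mathrm{dist}(x,S)=\inf_{s\in S}\mathrm{dist}(x,s)$. For a real analytic function $f$ on an open set $\Omega\subseteq\mathbb{R}$, not identically zero, the condition number is $\kappa(f,x)=0$ if $x=0$, $\kappa(f,x)=\infty$ if $x\neq0$ and $f(x)=0$, and $\kappa(f,x)=|x|\,|f'(x)|/|f(x)|$ otherwise; set $\mu(f,x)=1+\kappa(f,x)$. The function $f:\Omega\to\mathbb{R}$ is called amenable if there is a constant $C>0$ such that for every $x\in\Omega$ with $\kappa(f,x)<\infty$, the set $B_x=\{y\in\mathbb{R}:\mathrm{dist}(y,x)<1/(C\mu(f,x))\}$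 is contained in $\Omega$, and $\mu(f,y)\leq C\mu(f,x)$ for all $y\in B_x$. *)

theory Defs
  imports "HOL-Analysis.Analysis"
begin

definition real_analytic_on :: "(real \<Rightarrow> real) \<Rightarrow> real set \<Rightarrow> bool" where
  "real_analytic_on f S \<longleftrightarrow>
     (\<forall>x\<in>S. \<exists>r>0. \<exists>a::nat \<Rightarrow> real.
        \<forall>y. \<bar>y - x\<bar> < r \<longrightarrow> (\<lambda>n. a n * (y - x) ^ n) sums f y)"

definition reldist :: "real \<Rightarrow> real \<Rightarrow> ereal" where
  "reldist x y = (if x = 0 \<and> y = 0 then 0
                  else if x * y > 0 then ereal \<bar>ln (y / x)\<bar> else \<infinity>)"

definition reldist_set :: "real \<Rightarrow> real set \<Rightarrow> ereal" where
  "reldist_set x S = (INF s\<in>S. reldist x s)"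

definition kappa :: "(real \<Rightarrow> real) \<Rightarrow> real \<Rightarrow> ereal" where
  "kappa f x = (if x = 0 then 0
                else if f x = 0 then \<infinity>
                else ereal (\<bar>x\<bar> * \<bar>deriv f x\<bar> / \<bar>f x\<bar>))"

definition mu :: "(real \<Rightarrow> real) \<Rightarrow> real \<Rightarrow> ereal" where
  "mu f x = 1 + kappa f x"

definition amenable_on :: "(real \<Rightarrow> real) \<Rightarrow> real set \<Rightarrow> bool" where
  "amenable_on f \<Omega> \<longleftrightarrow>
     (\<exists>C>0. \<forall>x\<in>\<Omega>. kappa f x < \<infinity> \<longrightarrow>
        (let B = {y. reldist y x < ereal (1 / (C * real_of_ereal (mu f x)))} in
           B \<subseteq> \<Omega> \<and> (\<forall>y\<in>B. mu f y \<le> ereal C * mu f x)))"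

definition Hfun :: "(real \<Rightarrow> real) \<Rightarrow> real \<Rightarrow> real" where
  "Hfun f x = x\<^sup>2 * f x * deriv (deriv f) x / ((f x)\<^sup>2 + x\<^sup>2 * (deriv f x)\<^sup>2)"

end

theory Submission
  imports Defs
begin

definition PS :: "(nat \<Rightarrow> real) \<Rightarrow> real \<Rightarrow> real" where
  "PS c h = (\<Sum>n. c n * h ^ n)"

lemma ps_deriv:
  fixes c :: "nat \<Rightarrow> real" and h r :: real
  assumes "\<And>h. \<bar>h\<bar> < r \<Longrightarrow> summable (\<lambda>n. c n * h ^ n)" "\<bar>h\<bar> < r"
  shows "(PS c has_real_derivative PS (diffs c) h) (at h)"
  unfolding PS_def using termdiffs_strong'[of r c h] assms by auto

lemma ps_summ_diffs:
  fixes c :: "nat \<Rightarrow> real" and h r :: real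
  assumes "\<And>h. \<bar>h\<bar> < r \<Longrightarrow> summable (\<lambda>n. c n * h ^ n)" "\<bar>h\<bar> < r"
  shows "summable (\<lambda>n. diffs c n * h ^ n)"
  using termdiff_converges[of h r c] assms by auto

lemma ps_cont:
  fixes c :: "nat \<Rightarrow> real" and h r :: real
  assumes "\<And>h. \<bar>h\<bar> < r \<Longrightarrow> summable (\<lambda>n. c n * h ^ n)" "\<bar>h\<bar> < r"
  shows "isCont (PS c) h"
  using ps_deriv[OF assms] DERIV_isCont by blast

lemma ps_shift:
  fixes c :: "nat \<Rightarrow> real" and h r :: real
  assumes z: "\<And>i. i < k \<Longrightarrow> c i = 0"
    and s: "\<And>h. \<bar>h\<bar> < r \<Longrightarrow> summable (\<lambda>n. c n * h ^ n)" and h: "\<bar>h\<bar> < r"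
  shows "summable (\<lambda>n. c (n + k) * h ^ n) \<and> PS c h = h ^ k * PS (\<lambda>n. c (n + k)) h"
proof (cases "h = 0")
  case True
  have "summable (\<lambda>n. c (n + k) * h ^ n)" using True powser_sums_zero sums_summable by auto
  moreover have "PS c h = h ^ k * PS (\<lambda>n. c (n + k)) h"
    using True z by (cases k) (auto simp: PS_def)
  ultimately show ?thesis by blast
next
  case False
  have "(\<lambda>n. c n * h ^ n) sums PS c h" using s[OF h] by (simp add: PS_def summable_sums)
  then have "(\<lambda>i. c (i + k) * h ^ (i + k)) sums PS c h"
    using sums_zero_iff_shift[of k "\<lambda>n. c n * h ^ n"] z by auto
  then have "(\<lambda>i. c (i + k) * h ^ (i + k) / h ^ k) sums (PS c h / h ^ k)"
    by (rule sums_divide)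
  moreover have "\<And>i. c (i + k) * h ^ (i + k) / h ^ k = c (i + k) * h ^ i"
    using False by (simp add: power_add)
  ultimately have *: "(\<lambda>i. c (i + k) * h ^ i) sums (PS c h / h ^ k)" by simp
  then have "PS (\<lambda>n. c (n + k)) h = PS c h / h ^ k" by (simp add: PS_def sums_iff)
  then show ?thesis using * False sums_summable by auto
qed

lemma expansion:
  fixes f :: "real \<Rightarrow> real"
  assumes an: "real_analytic_on f {0<..<b}" and x0: "x0 \<in> {0<..<b}"
  obtains r a where "r > 0" "\<And>y. \<bar>y - x0\<bar> < r \<Longrightarrow> y \<in> {0<..<b}"
    "\<And>h. \<bar>h\<bar> < r \<Longrightarrow> summable (\<lambda>n. a n * h ^ n)"
    "\<And>h. \<bar>h\<bar> < r \<Longrightarrow> f (x0 + h) = PS a h"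
proof -
  obtain r0 a where r0: "r0 > 0" and s: "\<And>y. \<bar>y - x0\<bar> < r0 \<Longrightarrow> (\<lambda>n. a n * (y - x0) ^ n) sums f y"
    using an x0 unfolding real_analytic_on_def by blast
  define r where "r = min r0 (min x0 (b - x0))"
  have "r > 0" using r0 x0 by (auto simp: r_def)
  moreover have "\<And>y. \<bar>y - x0\<bar> < r \<Longrightarrow> y \<in> {0<..<b}" by (auto simp: r_def)
  moreover have "\<And>h. \<bar>h\<bar> < r \<Longrightarrow> summable (\<lambda>n. a n * h ^ n)"
    using s[of "x0 + _"] sums_summable by (force simp: r_def)
  moreover have "\<And>h. \<bar>h\<bar> < r \<Longrightarrow> f (x0 + h) = PS a h"
    using s[of "x0 + _"] unfolding PS_def by (force simp: r_def sums_iff)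
  ultimately show ?thesis using that by blast
qed

lemma expansion_derivs:
  fixes f :: "real \<Rightarrow> real" and a :: "nat \<Rightarrow> real"
  assumes s: "\<And>h. \<bar>h\<bar> < r \<Longrightarrow> summable (\<lambda>n. a n * h ^ n)"
    and e: "\<And>h. \<bar>h\<bar> < r \<Longrightarrow> f (x0 + h) = PS a h"
    and y: "\<bar>y - x0\<bar> < r"
  shows "(f has_real_derivative PS (diffs a) (y - x0)) (at y)"
    "deriv f y = PS (diffs a) (y - x0)"
    "(deriv f has_real_derivative PS (diffs (diffs a)) (y - x0)) (at y)"
    "deriv (deriv f) y = PS (diffs (diffs a)) (y - x0)"
proof -
  have s1: "\<And>h. \<bar>h\<bar> < r \<Longrightarrow> summable (\<lambda>n. diffs a n * h ^ n)"
    using ps_summ_diffs[OF s] by blast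
  have s2: "\<And>h. \<bar>h\<bar> < r \<Longrightarrow> summable (\<lambda>n. diffs (diffs a) n * h ^ n)"
    using ps_summ_diffs[OF s1] by blast
  define S where "S = {z. \<bar>z - x0\<bar> < r}"
  have oS: "open S" unfolding S_def
    by (metis (no_types, lifting) ball_def dist_real_def abs_minus_commute open_ball Collect_cong mem_Collect_eq)
  have D: "((\<lambda>z. PS c (z - x0)) has_real_derivative PS (diffs c) (z - x0)) (at z)"
    if "\<And>h. \<bar>h\<bar> < r \<Longrightarrow> summable (\<lambda>n. c n * h ^ n)" "z \<in> S" for c z
  proof -
    have "(PS c has_real_derivative PS (diffs c) (z - x0)) (at (z - x0))"
      using ps_deriv[of r c "z - x0"] that by (auto simp: S_def)
    moreover have "((\<lambda>z. z - x0) has_real_derivative 1) (at z)"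
      by (auto intro!: derivative_eq_intros)
    ultimately show ?thesis using DERIV_chain2[of "PS c" _ "\<lambda>z. z - x0" z] by fastforce
  qed
  have fe: "\<And>z. z \<in> S \<Longrightarrow> PS a (z - x0) = f z" using e[of "_ - x0"] by (auto simp: S_def)
  have yS: "y \<in> S" using y by (auto simp: S_def)
  have d1: "\<And>z. z \<in> S \<Longrightarrow> (f has_real_derivative PS (diffs a) (z - x0)) (at z)"
    using has_field_derivative_transform_within_open[OF D[OF s] oS _ fe] by blast
  then show "(f has_real_derivative PS (diffs a) (y - x0)) (at y)" using yS by blast
  have dd: "\<And>z. z \<in> S \<Longrightarrow> deriv f z = PS (diffs a) (z - x0)"
    using d1 DERIV_imp_deriv by blast
  then show "deriv f y = PS (diffs a) (y - x0)" using yS by blast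
  have d2: "\<And>z. z \<in> S \<Longrightarrow> (deriv f has_real_derivative PS (diffs (diffs a)) (z - x0)) (at z)"
    using has_field_derivative_transform_within_open[OF D[OF s1] oS _ ] dd by metis
  then show "(deriv f has_real_derivative PS (diffs (diffs a)) (y - x0)) (at y)" using yS by blast
  then show "deriv (deriv f) y = PS (diffs (diffs a)) (y - x0)" using DERIV_imp_deriv by blast
qed

lemma cont_bound:
  fixes \<Phi> :: "real \<Rightarrow> real"
  assumes "isCont \<Phi> 0"
  shows "\<exists>d>0. \<forall>h. \<bar>h\<bar> < d \<longrightarrow> \<bar>\<Phi> h\<bar> \<le> \<bar>\<Phi> 0\<bar> + 1"
proof -
  have "isCont (\<lambda>h. \<bar>\<Phi> h\<bar>) 0" using assms by (auto intro!: continuous_intros)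
  then obtain d where "d > 0" and d: "\<And>h. dist h 0 < d \<Longrightarrow> dist \<bar>\<Phi> h\<bar> \<bar>\<Phi> 0\<bar> < 1"
    unfolding continuous_at_eps_delta by (meson zero_less_one)
  have "\<forall>h. \<bar>h\<bar> < d \<longrightarrow> \<bar>\<Phi> h\<bar> \<le> \<bar>\<Phi> 0\<bar> + 1"
  proof (intro allI impI)
    fix h :: real assume "\<bar>h\<bar> < d"
    then have "\<bar>\<bar>\<Phi> h\<bar> - \<bar>\<Phi> 0\<bar>\<bar> < 1" using d by (simp add: dist_real_def)
    then show "\<bar>\<Phi> h\<bar> \<le> \<bar>\<Phi> 0\<bar> + 1" by linarith
  qed
  then show ?thesis using \<open>d > 0\<close> by blast
qed

lemma HB0:
  fixes y A B C :: real
  assumes "A \<noteq> 0"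
  shows "\<bar>y\<^sup>2 * A * C / (A\<^sup>2 + y\<^sup>2 * B\<^sup>2)\<bar> \<le> y\<^sup>2 * \<bar>C\<bar> / \<bar>A\<bar>"
proof -
  have p: "A\<^sup>2 > 0" using assms by simp
  have "\<bar>y\<^sup>2 * A * C / (A\<^sup>2 + y\<^sup>2 * B\<^sup>2)\<bar> = y\<^sup>2 * \<bar>A * C\<bar> / (A\<^sup>2 + y\<^sup>2 * B\<^sup>2)"
    by (simp add: abs_mult)
  also have "\<dots> \<le> y\<^sup>2 * \<bar>A * C\<bar> / A\<^sup>2"
    by (rule divide_left_mono) (use p in \<open>auto intro!: mult_pos_pos add_pos_nonneg\<close>)
  also have "\<dots> = y\<^sup>2 * \<bar>C\<bar> / \<bar>A\<bar>" using assms by (cases "A > 0") (auto simp: abs_mult power2_eq_square field_simps)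
  finally show ?thesis .
qed

lemma HB1:
  fixes y A B C :: real
  assumes "B \<noteq> 0" "y \<noteq> 0"
  shows "\<bar>y\<^sup>2 * A * C / (A\<^sup>2 + y\<^sup>2 * B\<^sup>2)\<bar> \<le> \<bar>A * C\<bar> / B\<^sup>2"
proof -
  have p: "y\<^sup>2 * B\<^sup>2 > 0" using assms by simp
  have "\<bar>y\<^sup>2 * A * C / (A\<^sup>2 + y\<^sup>2 * B\<^sup>2)\<bar> = y\<^sup>2 * \<bar>A * C\<bar> / (A\<^sup>2 + y\<^sup>2 * B\<^sup>2)"
    by (simp add: abs_mult)
  also have "\<dots> \<le> y\<^sup>2 * \<bar>A * C\<bar> / (y\<^sup>2 * B\<^sup>2)"
    by (rule divide_left_mono) (use p in \<open>auto intro!: mult_pos_pos add_nonneg_pos\<close>)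
  also have "\<dots> = \<bar>A * C\<bar> / B\<^sup>2" using assms by simp
  finally show ?thesis .
qed

lemma iso_zero:
  fixes f :: "real \<Rightarrow> real" and a :: "nat \<Rightarrow> real"
  assumes r: "r > 0" and s: "\<And>h. \<bar>h\<bar> < r \<Longrightarrow> summable (\<lambda>n. a n * h ^ n)"
    and e: "\<And>h. \<bar>h\<bar> < r \<Longrightarrow> f (x0 + h) = PS a h"
    and nz: "\<exists>n. a n \<noteq> 0"
  shows "\<exists>d>0. \<forall>y. 0 < \<bar>y - x0\<bar> \<and> \<bar>y - x0\<bar> < d \<longrightarrow> f y \<noteq> 0"
proof -
  define m where "m = (LEAST n. a n \<noteq> 0)"
  have am: "a m \<noteq> 0" unfolding m_def using nz by (rule LeastI_ex)
  have z: "a i = 0" if "i < m" for i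
    using not_less_Least[of i "\<lambda>n. a n \<noteq> 0"] that unfolding m_def by auto
  define c where "c = (\<lambda>n. a (n + m))"
  have sh: "\<And>h. \<bar>h\<bar> < r \<Longrightarrow> summable (\<lambda>n. c n * h ^ n) \<and> PS a h = h ^ m * PS c h"
    using ps_shift[OF z s] unfolding c_def by blast
  have "isCont (PS c) 0" using ps_cont[of r c 0] sh r by auto
  moreover have "PS c 0 = a m" by (simp add: PS_def c_def)
  ultimately obtain d0 where d0: "d0 > 0" "\<And>y. dist 0 y < d0 \<Longrightarrow> PS c y \<noteq> 0"
    using continuous_at_avoid[of 0 "PS c" 0] am by auto
  show ?thesis
  proof (intro exI[of _ "min d0 r"] conjI allI impI)
    show "min d0 r > 0" using d0 r by simp
    fix y assume y: "0 < \<bar>y - x0\<bar> \<and> \<bar>y - x0\<bar> < min d0 r"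
    have "f y = PS a (y - x0)" using e[of "y - x0"] y by simp
    also have "\<dots> = (y - x0) ^ m * PS c (y - x0)" using sh[of "y - x0"] y by simp
    finally have "f y = (y - x0) ^ m * PS c (y - x0)" .
    moreover have "PS c (y - x0) \<noteq> 0" using d0(2)[of "y - x0"] y by (auto simp: dist_real_def abs_minus_commute)
    ultimately show "f y \<noteq> 0" using y by auto
  qed
qed

lemma local_H:
  fixes f :: "real \<Rightarrow> real" and a :: "nat \<Rightarrow> real"
  assumes r: "r > 0" and s: "\<And>h. \<bar>h\<bar> < r \<Longrightarrow> summable (\<lambda>n. a n * h ^ n)"
    and e: "\<And>h. \<bar>h\<bar> < r \<Longrightarrow> f (x0 + h) = PS a h"
    and dom: "\<And>y. \<bar>y - x0\<bar> < r \<Longrightarrow> y > 0"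
    and nz: "\<exists>n. a n \<noteq> 0"
  shows "\<exists>d>0. \<exists>M. \<forall>y. \<bar>y - x0\<bar> < d \<longrightarrow> f y \<noteq> 0 \<longrightarrow> \<bar>Hfun f y\<bar> \<le> M"
proof -
  have s1: "\<And>h. \<bar>h\<bar> < r \<Longrightarrow> summable (\<lambda>n. diffs a n * h ^ n)"
    using ps_summ_diffs[OF s] by blast
  have s2: "\<And>h. \<bar>h\<bar> < r \<Longrightarrow> summable (\<lambda>n. diffs (diffs a) n * h ^ n)"
    using ps_summ_diffs[OF s1] by blast
  have HF: "Hfun f y = y\<^sup>2 * PS a (y - x0) * PS (diffs (diffs a)) (y - x0) /
      ((PS a (y - x0))\<^sup>2 + y\<^sup>2 * (PS (diffs a) (y - x0))\<^sup>2)" if "\<bar>y - x0\<bar> < r" for y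
  proof -
    have "f y = PS a (y - x0)" using e[of "y - x0"] that by simp
    then show ?thesis using expansion_derivs[OF s e that] unfolding Hfun_def by simp
  qed
  define m where "m = (LEAST n. a n \<noteq> 0)"
  have am: "a m \<noteq> 0" unfolding m_def using nz by (rule LeastI_ex)
  have z: "a i = 0" if "i < m" for i
    using not_less_Least[of i "\<lambda>n. a n \<noteq> 0"] that unfolding m_def by auto
  show ?thesis
  proof (cases "m = 0")
    case True
    define \<Phi> where "\<Phi> h = (x0 + h)\<^sup>2 * PS (diffs (diffs a)) h / PS a h" for h
    have pa0: "PS a 0 \<noteq> 0" using am True by (simp add: PS_def)
    have "isCont \<Phi> 0" unfolding \<Phi>_def
      using ps_cont[of r a 0] ps_cont[of r "diffs (diffs a)" 0] s s2 r pa0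
      by (auto intro!: continuous_intros)
    then obtain d1 where d1: "d1 > 0" "\<And>h. \<bar>h\<bar> < d1 \<Longrightarrow> \<bar>\<Phi> h\<bar> \<le> \<bar>\<Phi> 0\<bar> + 1"
      using cont_bound by blast
    show ?thesis
    proof (rule exI[of _ "min d1 r"], intro conjI exI[of _ "\<bar>\<Phi> 0\<bar> + 1"] allI impI)
      show "min d1 r > 0" using d1 r by simp
      fix y assume y: "\<bar>y - x0\<bar> < min d1 r" and fy: "f y \<noteq> 0"
      have fy': "PS a (y - x0) \<noteq> 0" using fy e[of "y - x0"] y by simp
      have "\<bar>Hfun f y\<bar> = \<bar>y\<^sup>2 * PS a (y - x0) * PS (diffs (diffs a)) (y - x0) /
      ((PS a (y - x0))\<^sup>2 + y\<^sup>2 * (PS (diffs a) (y - x0))\<^sup>2)\<bar>" using HF[of y] y by simp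
      also have "\<dots> \<le> y\<^sup>2 * \<bar>PS (diffs (diffs a)) (y - x0)\<bar> / \<bar>PS a (y - x0)\<bar>"
        by (rule HB0[OF fy'])
      also have "\<dots> = \<bar>\<Phi> (y - x0)\<bar>" unfolding \<Phi>_def by (simp add: abs_mult)
      also have "\<dots> \<le> \<bar>\<Phi> 0\<bar> + 1" using d1(2)[of "y - x0"] y by simp
      finally show "\<bar>Hfun f y\<bar> \<le> \<bar>\<Phi> 0\<bar> + 1" .
    qed
  next
    case False
    define c0 where "c0 = (\<lambda>n. a (n + m))"
    define c1 where "c1 = (\<lambda>n. diffs a (n + (m - 1)))"
    define c2 where "c2 = (\<lambda>n. diffs (diffs a) (n + (m - 2)))"
    have z1: "diffs a i = 0" if "i < m - 1" for i
      using z[of "Suc i"] that by (simp add: diffs_def)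
    have z2: "diffs (diffs a) i = 0" if "i < m - 2" for i
      using z1[of "Suc i"] that by (simp add: diffs_def)
    have sh0: "\<And>h. \<bar>h\<bar> < r \<Longrightarrow> summable (\<lambda>n. c0 n * h ^ n) \<and> PS a h = h ^ m * PS c0 h"
      using ps_shift[OF z s] unfolding c0_def by blast
    have sh1: "\<And>h. \<bar>h\<bar> < r \<Longrightarrow> summable (\<lambda>n. c1 n * h ^ n) \<and> PS (diffs a) h = h ^ (m - 1) * PS c1 h"
      using ps_shift[OF z1 s1] unfolding c1_def by blast
    have sh2: "\<And>h. \<bar>h\<bar> < r \<Longrightarrow> summable (\<lambda>n. c2 n * h ^ n) \<and> PS (diffs (diffs a)) h = h ^ (m - 2) * PS c2 h"
      using ps_shift[OF z2 s2] unfolding c2_def by blast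
    have c10: "PS c1 0 \<noteq> 0" using am False by (simp add: PS_def c1_def diffs_def)
    have cc0: "isCont (PS c0) 0" using ps_cont[of r c0 0] sh0 r by auto
    have cc1: "isCont (PS c1) 0" using ps_cont[of r c1 0] sh1 r by auto
    have cc2: "isCont (PS c2) 0" using ps_cont[of r c2 0] sh2 r by auto
    define \<Phi> where "\<Phi> h = (if m = 1 then h else 1) * PS c0 h * PS c2 h / (PS c1 h)\<^sup>2" for h
    have "isCont \<Phi> 0" unfolding \<Phi>_def
      using cc0 cc1 cc2 c10 by (cases "m = 1") (auto intro!: continuous_intros)
    then obtain d1 where d1: "d1 > 0" "\<And>h. \<bar>h\<bar> < d1 \<Longrightarrow> \<bar>\<Phi> h\<bar> \<le> \<bar>\<Phi> 0\<bar> + 1"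
      using cont_bound by blast
    obtain d2 where d2: "d2 > 0" "\<And>y. dist 0 y < d2 \<Longrightarrow> PS c1 y \<noteq> 0"
      using continuous_at_avoid[of 0 "PS c1" 0] cc1 c10 by auto
    show ?thesis
    proof (rule exI[of _ "min (min d1 d2) r"], intro conjI exI[of _ "\<bar>\<Phi> 0\<bar> + 1"] allI impI)
      show "min (min d1 d2) r > 0" using d1 d2 r by simp
      fix y assume y: "\<bar>y - x0\<bar> < min (min d1 d2) r" and fy: "f y \<noteq> 0"
      define h where "h = y - x0"
      have hr: "\<bar>h\<bar> < r" using y by (simp add: h_def)
      have fy': "PS a h \<noteq> 0" using fy e[of "y - x0"] y by (simp add: h_def)
      have h0: "h \<noteq> 0" using fy' False z[of 0] by (auto simp: PS_def)
      have g1: "PS c1 h \<noteq> 0" using d2(2)[of h] y by (simp add: h_def dist_real_def abs_minus_commute)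
      have F1: "PS (diffs a) h \<noteq> 0" using sh1[OF hr] g1 h0 by simp
      have ypos: "y \<noteq> 0" using dom[of y] y by auto
      have "\<bar>Hfun f y\<bar> = \<bar>y\<^sup>2 * PS a h * PS (diffs (diffs a)) h /
      ((PS a h)\<^sup>2 + y\<^sup>2 * (PS (diffs a) h)\<^sup>2)\<bar>" using HF[of y] y by (simp add: h_def)
      also have "\<dots> \<le> \<bar>PS a h * PS (diffs (diffs a)) h\<bar> / (PS (diffs a) h)\<^sup>2"
        by (rule HB1[OF F1 ypos])
      also have "\<dots> = \<bar>\<Phi> h\<bar>"
      proof -
        have pe: "h ^ m * h ^ (m - 2) = (if m = 1 then h else 1) * (h ^ (m - 1))\<^sup>2"
        proof (cases "m = 1")
          case True then show ?thesis by simp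
        next
          case False2: False
          then obtain k where "m = Suc (Suc k)" using False
            by (metis One_nat_def not0_implies_Suc)
          then show ?thesis by (simp add: power_add[symmetric] power2_eq_square)
        qed
        have Q: "(h ^ (m - 1))\<^sup>2 > 0" using h0 by simp
        have "\<bar>PS a h * PS (diffs (diffs a)) h\<bar> / (PS (diffs a) h)\<^sup>2 =
            \<bar>(h ^ m * h ^ (m - 2)) * (PS c0 h * PS c2 h)\<bar> / ((h ^ (m - 1))\<^sup>2 * (PS c1 h)\<^sup>2)"
          using sh0[OF hr] sh1[OF hr] sh2[OF hr] by (simp add: power_mult_distrib algebra_simps)
        also have "\<dots> = \<bar>(if m = 1 then h else 1) * (PS c0 h * PS c2 h)\<bar> / (PS c1 h)\<^sup>2"
        proof -
          have gen: "\<And>e X G Q::real. Q > 0 \<Longrightarrow> \<bar>(e * Q) * X\<bar> / (Q * G) = \<bar>e * X\<bar> / G"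
            by (simp add: abs_mult)
          show ?thesis unfolding pe by (rule gen[OF Q])
        qed
        also have "\<dots> = \<bar>\<Phi> h\<bar>" unfolding \<Phi>_def using h0 by (simp add: abs_mult algebra_simps)
        finally show ?thesis .
      qed
      also have "\<dots> \<le> \<bar>\<Phi> 0\<bar> + 1" using d1(2)[of h] y by (simp add: h_def)
      finally show "\<bar>Hfun f y\<bar> \<le> \<bar>\<Phi> 0\<bar> + 1" .
    qed
  qed
qed

lemma derivs_global:
  fixes f :: "real \<Rightarrow> real"
  assumes an: "real_analytic_on f {0<..<b}" and y: "y \<in> {0<..<b}"
  shows "(f has_real_derivative deriv f y) (at y)"
    "(deriv f has_real_derivative deriv (deriv f) y) (at y)"
proof -
  obtain r a where r: "r > 0" "\<And>h. \<bar>h\<bar> < r \<Longrightarrow> summable (\<lambda>n. a n * h ^ n)"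
    "\<And>h. \<bar>h\<bar> < r \<Longrightarrow> f (y + h) = PS a h"
    using expansion[OF an y] by metis
  have "\<bar>y - y\<bar> < r" using r by simp
  note D = expansion_derivs[OF r(2) r(3) this]
  show "(f has_real_derivative deriv f y) (at y)" using D(1,2) by simp
  show "(deriv f has_real_derivative deriv (deriv f) y) (at y)" using D(3,4) by simp
qed

lemma coeffs_nonzero:
  fixes f :: "real \<Rightarrow> real"
  assumes an: "real_analytic_on f {0<..<b}" and ex: "\<exists>x\<in>{0<..<b}. f x \<noteq> 0"
    and x0: "x0 \<in> {0<..<b}" and r: "r > 0" and e: "\<And>h. \<bar>h\<bar> < r \<Longrightarrow> f (x0 + h) = PS a h"
  shows "\<exists>n. a n \<noteq> 0"
proof (rule ccontr)
  assume "\<not> (\<exists>n. a n \<noteq> 0)"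
  then have z0: "\<And>h. \<bar>h\<bar> < r \<Longrightarrow> f (x0 + h) = 0" using e by (simp add: PS_def)
  define U where "U = {x. \<exists>e>0. \<forall>y. \<bar>y - x\<bar> < e \<longrightarrow> f y = 0}"
  define V where "V = {x. \<exists>e>0. \<forall>y. 0 < \<bar>y - x\<bar> \<and> \<bar>y - x\<bar> < e \<longrightarrow> f y \<noteq> 0}"
  have x0U: "x0 \<in> U" unfolding U_def using z0[of "_ - x0"] r by (intro CollectI exI[of _ r]) auto
  have oU: "open U" unfolding open_dist
  proof
    fix x assume "x \<in> U"
    then obtain e where e: "e > 0" "\<And>y. \<bar>y - x\<bar> < e \<Longrightarrow> f y = 0" unfolding U_def by blast
    show "\<exists>e>0. \<forall>y. dist y x < e \<longrightarrow> y \<in> U"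
    proof (intro exI[of _ e] conjI allI impI)
      fix y assume "dist y x < e"
      then have "\<forall>z. \<bar>z - y\<bar> < e - \<bar>y - x\<bar> \<longrightarrow> f z = 0" using e by (auto simp: dist_real_def)
      moreover have "e - \<bar>y - x\<bar> > 0" using \<open>dist y x < e\<close> by (simp add: dist_real_def)
      ultimately show "y \<in> U" unfolding U_def by blast
    qed (use e in auto)
  qed
  have oV: "open V" unfolding open_dist
  proof
    fix x assume "x \<in> V"
    then obtain e where e: "e > 0" "\<And>y. 0 < \<bar>y - x\<bar> \<Longrightarrow> \<bar>y - x\<bar> < e \<Longrightarrow> f y \<noteq> 0"
      unfolding V_def by blast
    show "\<exists>e>0. \<forall>y. dist y x < e \<longrightarrow> y \<in> V"
    proof (intro exI[of _ e] conjI allI impI)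
      fix y assume y: "dist y x < e"
      show "y \<in> V"
      proof (cases "y = x")
        case True then show ?thesis using \<open>x \<in> V\<close> by simp
      next
        case False
        have "\<forall>z. 0 < \<bar>z - y\<bar> \<and> \<bar>z - y\<bar> < min \<bar>y - x\<bar> (e - \<bar>y - x\<bar>) \<longrightarrow> f z \<noteq> 0"
        proof (intro allI impI)
          fix z assume "0 < \<bar>z - y\<bar> \<and> \<bar>z - y\<bar> < min \<bar>y - x\<bar> (e - \<bar>y - x\<bar>)"
          then have "0 < \<bar>z - x\<bar>" "\<bar>z - x\<bar> < e" by (simp_all add: min_def split: if_splits; arith)+
          then show "f z \<noteq> 0" using e by blast
        qed
        moreover have "min \<bar>y - x\<bar> (e - \<bar>y - x\<bar>) > 0" using y False by (simp add: dist_real_def)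
        ultimately show ?thesis unfolding V_def by blast
      qed
    qed (use e in auto)
  qed
  have disj: "U \<inter> V \<inter> {0<..<b} = {}"
  proof (rule ccontr)
    assume "U \<inter> V \<inter> {0<..<b} \<noteq> {}"
    then obtain x e1 e2 where A: "e1 > 0" "\<And>y. \<bar>y - x\<bar> < e1 \<Longrightarrow> f y = 0"
      "e2 > 0" "\<And>y. 0 < \<bar>y - x\<bar> \<Longrightarrow> \<bar>y - x\<bar> < e2 \<Longrightarrow> f y \<noteq> 0"
      unfolding U_def V_def by blast
    define t where "t = min e1 e2 / 2"
    have t: "0 < t" "t < e1" "t < e2" using A(1,3) by (auto simp: t_def min_def)
    have "\<bar>(x + t) - x\<bar> = t" using t by simp
    then show False using A(2)[of "x + t"] A(4)[of "x + t"] t by simp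
  qed
  have cov: "{0<..<b} \<subseteq> U \<union> V"
  proof
    fix x assume x: "x \<in> {0<..<b}"
    obtain r' a' where r': "r' > 0" "\<And>h. \<bar>h\<bar> < r' \<Longrightarrow> summable (\<lambda>n. a' n * h ^ n)"
      "\<And>h. \<bar>h\<bar> < r' \<Longrightarrow> f (x + h) = PS a' h"
      using expansion[OF an x] by metis
    show "x \<in> U \<union> V"
    proof (cases "\<exists>n. a' n \<noteq> 0")
      case True
      from iso_zero[OF r' True] show ?thesis unfolding V_def by blast
    next
      case False
      then have "\<And>h. \<bar>h\<bar> < r' \<Longrightarrow> f (x + h) = 0" using r'(3) by (simp add: PS_def)
      then have "x \<in> U" unfolding U_def using r'(1)
        by (intro CollectI exI[of _ r']) (metis add_diff_cancel_left' add.commute diff_add_cancel)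
      then show ?thesis by blast
    qed
  qed
  from connectedD[OF connected_Ioo oU oV disj cov] x0U x0 have "V \<inter> {0<..<b} = {}" by blast
  with cov have "{0<..<b} \<subseteq> U" by blast
  then have "\<forall>x\<in>{0<..<b}. f x = 0" unfolding U_def by force
  with ex show False by blast
qed

lemma H_global:
  fixes f :: "real \<Rightarrow> real"
  assumes b: "b > 0" and an: "real_analytic_on f {0<..<b}" and ex: "\<exists>x\<in>{0<..<b}. f x \<noteq> 0"
    and lims: "\<exists>C>0. Limsup (at_right 0) (\<lambda>x. ereal \<bar>Hfun f x\<bar>) \<le> ereal C
              \<and> Limsup (at_left b) (\<lambda>x. ereal \<bar>Hfun f x\<bar>) \<le> ereal C"
  shows "\<exists>M\<ge>0. \<forall>y\<in>{0<..<b}. f y \<noteq> 0 \<longrightarrow> \<bar>Hfun f y\<bar> \<le> M"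
proof -
  obtain C where C: "C > 0" "Limsup (at_right 0) (\<lambda>x. ereal \<bar>Hfun f x\<bar>) \<le> ereal C"
    "Limsup (at_left b) (\<lambda>x. ereal \<bar>Hfun f x\<bar>) \<le> ereal C" using lims by blast
  have "eventually (\<lambda>x. ereal \<bar>Hfun f x\<bar> < ereal (C + 1)) (at_right 0)"
    by (rule Limsup_lessD, rule le_less_trans[OF C(2)]) simp
  then obtain p where p: "p > 0" "\<And>y. y > 0 \<Longrightarrow> y < p \<Longrightarrow> \<bar>Hfun f y\<bar> < C + 1"
    unfolding eventually_at_right_field by auto
  have "eventually (\<lambda>x. ereal \<bar>Hfun f x\<bar> < ereal (C + 1)) (at_left b)"
    by (rule Limsup_lessD, rule le_less_trans[OF C(3)]) simp
  then obtain q where q: "q < b" "\<And>y. y > q \<Longrightarrow> y < b \<Longrightarrow> \<bar>Hfun f y\<bar> < C + 1"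
    unfolding eventually_at_left_field by auto
  have loc: "\<forall>x\<in>{p..q}. \<exists>d. d > 0 \<and> (\<exists>M. \<forall>y. \<bar>y - x\<bar> < d \<longrightarrow> f y \<noteq> 0 \<longrightarrow> \<bar>Hfun f y\<bar> \<le> M)"
  proof
    fix x assume "x \<in> {p..q}"
    then have x: "x \<in> {0<..<b}" using p q by auto
    obtain r a where r: "r > 0" "\<And>y. \<bar>y - x\<bar> < r \<Longrightarrow> y \<in> {0<..<b}"
      "\<And>h. \<bar>h\<bar> < r \<Longrightarrow> summable (\<lambda>n. a n * h ^ n)"
      "\<And>h. \<bar>h\<bar> < r \<Longrightarrow> f (x + h) = PS a h"
      using expansion[OF an x] by metis
    have nz: "\<exists>n. a n \<noteq> 0" using coeffs_nonzero[OF an ex x r(1) r(4)] .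
    have dom: "\<And>y. \<bar>y - x\<bar> < r \<Longrightarrow> y > 0" using r(2) by auto
    show "\<exists>d. d > 0 \<and> (\<exists>M. \<forall>y. \<bar>y - x\<bar> < d \<longrightarrow> f y \<noteq> 0 \<longrightarrow> \<bar>Hfun f y\<bar> \<le> M)"
      using local_H[OF r(1) r(3) r(4) dom nz] by blast
  qed
  then obtain d where d: "\<And>x. x \<in> {p..q} \<Longrightarrow> d x > 0 \<and> (\<exists>M. \<forall>y. \<bar>y - x\<bar> < d x \<longrightarrow> f y \<noteq> 0 \<longrightarrow> \<bar>Hfun f y\<bar> \<le> M)"
    by metis
  then obtain Mf where Mf: "\<And>x. x \<in> {p..q} \<Longrightarrow> d x > 0 \<and> (\<forall>y. \<bar>y - x\<bar> < d x \<longrightarrow> f y \<noteq> 0 \<longrightarrow> \<bar>Hfun f y\<bar> \<le> Mf x)"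
    by metis
  have "{p..q} \<subseteq> (\<Union>x\<in>{p..q}. ball x (d x))" using Mf by force
  then obtain K where K: "K \<subseteq> {p..q}" "finite K" "{p..q} \<subseteq> (\<Union>x\<in>K. ball x (d x))"
    using compactE_image[of "{p..q}" "{p..q}" "\<lambda>x. ball x (d x)"] by auto
  define M where "M = max (C + 1) (\<Sum>x\<in>K. \<bar>Mf x\<bar>)"
  show ?thesis
  proof (intro exI[of _ M] conjI ballI impI)
    show "M \<ge> 0" using C by (simp add: M_def)
    fix y assume y: "y \<in> {0<..<b}" and fy: "f y \<noteq> 0"
    show "\<bar>Hfun f y\<bar> \<le> M"
    proof (cases "y < p \<or> y > q")
      case True
      then have "\<bar>Hfun f y\<bar> < C + 1" using p(2) q(2) y by auto
      then show ?thesis by (simp add: M_def)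
    next
      case False
      then have "y \<in> {p..q}" by auto
      then obtain x where x: "x \<in> K" "y \<in> ball x (d x)" using K by blast
      then have "\<bar>Hfun f y\<bar> \<le> Mf x" using Mf[of x] K(1) fy by (auto simp: dist_real_def abs_minus_commute)
      also have "\<dots> \<le> (\<Sum>x\<in>K. \<bar>Mf x\<bar>)"
        using member_le_sum[of x K "\<lambda>x. \<bar>Mf x\<bar>"] x K(2) by (smt (verit))
      finally show ?thesis by (simp add: M_def)
    qed
  qed
qed

lemma cont_right:
  fixes F Q F' Q' :: "real \<Rightarrow> real"
  assumes x01: "x0 < s1" and cF: "continuous_on {x0..s1} F" and F0: "F x0 \<noteq> 0"
    and der: "\<And>t. t \<in> {x0..s1} \<Longrightarrow> F t \<noteq> 0 \<Longrightarrow> (F has_real_derivative F' t) (at t)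
       \<and> (Q has_real_derivative Q' t) (at t) \<and> \<bar>Q' t\<bar> \<le> D \<and> Q t > 0 \<and> \<bar>F' t\<bar> * Q t \<le> E * \<bar>F t\<bar>"
    and small: "D * (s1 - x0) \<le> Q x0 / 2"
  shows "\<forall>t\<in>{x0..s1}. F t \<noteq> 0 \<and> Q t \<ge> Q x0 - D * (t - x0)"
proof -
  have D0: "D \<ge> 0" using der[of x0] x01 F0 by auto
  have Q0: "Q x0 > 0" using der[of x0] x01 F0 by auto
  have E0: "E \<ge> 0"
  proof -
    have h: "\<bar>F' x0\<bar> * Q x0 \<le> E * \<bar>F x0\<bar>" using der[of x0] x01 F0 by auto
    have "0 \<le> \<bar>F' x0\<bar> * Q x0" using Q0 by simp
    then have "0 \<le> E * \<bar>F x0\<bar>" using h by linarith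
    then show ?thesis using F0 by (simp add: zero_le_mult_iff)
  qed
  have step1: "Q t \<ge> Q x0 - D * (t - x0)" if t: "t \<in> {x0..s1}" and nz: "\<forall>\<tau>\<in>{x0..t}. F \<tau> \<noteq> 0" for t
  proof (cases "t = x0")
    case True then show ?thesis by simp
  next
    case False
    then have "x0 < t" using t by auto
    then obtain z where z: "x0 < z" "z < t" "Q t - Q x0 = (t - x0) * Q' z"
      using MVT2[of x0 t Q Q'] der nz t by force
    have "\<bar>Q' z\<bar> \<le> D" using der[of z] nz z t by auto
    then have "-D \<le> Q' z" by linarith
    then have "(t - x0) * (-D) \<le> (t - x0) * Q' z" by (rule mult_left_mono) (use z in auto)
    then have "(t - x0) * Q' z \<ge> - ((t - x0) * D)" by simp
    then show ?thesis using z by (simp add: algebra_simps)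
  qed
  have nozero: "\<forall>t\<in>{x0..s1}. F t \<noteq> 0"
  proof (rule ccontr)
    assume "\<not> (\<forall>t\<in>{x0..s1}. F t \<noteq> 0)"
    then have ne: "{t \<in> {x0..s1}. F t = 0} \<noteq> {}" by auto
    have "closed {t \<in> {x0..s1}. F t = 0}"
      using continuous_closed_preimage_constant[OF cF] by auto
    then have "compact {t \<in> {x0..s1}. F t = 0}"
      by (metis (no_types, lifting) bounded_subset compact_Icc compact_eq_bounded_closed mem_Collect_eq subsetI)
    then obtain z where z: "z \<in> {t \<in> {x0..s1}. F t = 0}" "\<And>y. y \<in> {t \<in> {x0..s1}. F t = 0} \<Longrightarrow> z \<le> y"
      using compact_attains_inf[OF _ ne] by blast
    have zx: "z > x0" using z F0 by (cases "z = x0") auto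
    have before: "F t \<noteq> 0" if "t \<in> {x0..<z}" for t
      using z that by force
    have Qb: "Q t \<ge> Q x0 / 2" if "t \<in> {x0..<z}" for t
    proof -
      have "Q t \<ge> Q x0 - D * (t - x0)" using step1[of t] before that z by auto
      moreover have "D * (t - x0) \<le> D * (s1 - x0)" using that z D0 by (auto intro!: mult_left_mono)
      ultimately show ?thesis using small by linarith
    qed
    define L where "L = 4 * E / Q x0"
    define lam where "lam = ln ((F x0)\<^sup>2) - L * (z - x0)"
    have lnb: "ln ((F t)\<^sup>2) \<ge> lam" if t: "t \<in> {x0..<z}" for t
    proof (cases "t = x0")
      case True
      have "E \<ge> 0" by (rule E0)
      then have "L * (z - x0) \<ge> 0" using zx Q0 by (simp add: L_def)
      then show ?thesis using True by (simp add: lam_def)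
    next
      case False
      then have xt: "x0 < t" using t by auto
      have dd: "((\<lambda>s. ln ((F s)\<^sup>2)) has_real_derivative 2 * F' s / F s) (at s)" if "s \<in> {x0..t}" for s
      proof -
        have s: "s \<in> {x0..s1}" "F s \<noteq> 0" using that t z before[of s] by auto
        have "(F has_real_derivative F' s) (at s)" using der[OF s] by blast
        then have d2: "((\<lambda>s. (F s)\<^sup>2) has_real_derivative of_nat 2 * (F' s * F s ^ (2 - Suc 0))) (at s)"
          by (rule DERIV_power)
        have p: "(F s)\<^sup>2 > 0" using s(2) by simp
        have "((\<lambda>s. ln ((F s)\<^sup>2)) has_real_derivative inverse ((F s)\<^sup>2) * (of_nat 2 * (F' s * F s ^ (2 - Suc 0)))) (at s)"
          by (rule DERIV_chain2[OF DERIV_ln[OF p] d2])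
        then show ?thesis using s(2) by (simp add: power2_eq_square field_simps)
      qed
      obtain w where w: "x0 < w" "w < t" "ln ((F t)\<^sup>2) - ln ((F x0)\<^sup>2) = (t - x0) * (2 * F' w / F w)"
        using MVT2[of x0 t "\<lambda>s. ln ((F s)\<^sup>2)" "\<lambda>s. 2 * F' s / F s"] dd xt by force
      have ws: "w \<in> {x0..s1}" "F w \<noteq> 0" using w t z before[of w] by auto
      have bw: "\<bar>F' w\<bar> * Q w \<le> E * \<bar>F w\<bar>" "Q w > 0" using der[OF ws] by auto
      have Qw: "Q w \<ge> Q x0 / 2" using Qb[of w] w t by auto
      have "\<bar>F' w\<bar> \<le> E * \<bar>F w\<bar> / Q w" using bw by (simp add: field_simps)
      also have "\<dots> \<le> E * \<bar>F w\<bar> / (Q x0 / 2)"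
        by (rule divide_left_mono) (use Qw Q0 bw E0 in auto)
      also have "\<dots> = 2 * E * \<bar>F w\<bar> / Q x0" by simp
      finally have A: "\<bar>F' w\<bar> \<le> 2 * E * \<bar>F w\<bar> / Q x0" .
      have "\<bar>2 * F' w / F w\<bar> = 2 * \<bar>F' w\<bar> / \<bar>F w\<bar>" by (simp add: abs_divide abs_mult)
      also have "\<dots> \<le> 2 * (2 * E * \<bar>F w\<bar> / Q x0) / \<bar>F w\<bar>"
        by (rule divide_right_mono) (use A in auto)
      also have "\<dots> = L" using ws(2) by (simp add: L_def field_simps)
      finally have "\<bar>2 * F' w / F w\<bar> \<le> L" .
      then have "-L \<le> 2 * F' w / F w" by linarith
      then have "(t - x0) * (-L) \<le> (t - x0) * (2 * F' w / F w)" by (rule mult_left_mono) (use xt in auto)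
      then have "(t - x0) * (2 * F' w / F w) \<ge> - ((t - x0) * L)" by simp
      moreover have "(t - x0) * L \<le> (z - x0) * L"
      proof -
        have "0 \<le> L" using \<open>\<bar>2 * F' w / F w\<bar> \<le> L\<close> by (meson abs_ge_zero order_trans)
        then show ?thesis using t xt by (intro mult_right_mono) auto
      qed
      ultimately show ?thesis using w(3) by (simp add: lam_def algebra_simps)
    qed
    have Fb: "\<bar>F t\<bar> \<ge> exp (lam / 2)" if "t \<in> {x0..<z}" for t
    proof -
      have "F t \<noteq> 0" using before that by blast
      then have "(F t)\<^sup>2 = exp (ln ((F t)\<^sup>2))" by simp
      also have "\<dots> \<ge> exp lam" using lnb[OF that] by simp
      finally have "(exp (lam / 2))\<^sup>2 \<le> \<bar>F t\<bar>\<^sup>2" by (simp add: exp_double[symmetric] power2_eq_square exp_add[symmetric])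
      then show ?thesis by (rule power2_le_imp_le) simp
    qed
    obtain \<delta> where \<delta>: "\<delta> > 0" "\<And>t. t \<in> {x0..s1} \<Longrightarrow> dist t z < \<delta> \<Longrightarrow> dist (F t) (F z) < exp (lam / 2)"
      using cF z(1) unfolding continuous_on_iff by (metis (no_types, lifting) exp_gt_zero mem_Collect_eq)
    define t where "t = max x0 (z - \<delta> / 2)"
    have t: "t \<in> {x0..<z}" "t \<in> {x0..s1}" "dist t z < \<delta>" using zx \<delta>(1) z(1) by (auto simp: t_def dist_real_def)
    have "\<bar>F t\<bar> < exp (lam / 2)" using \<delta>(2)[OF t(2,3)] z(1) by (simp add: dist_real_def)
    with Fb[OF t(1)] show False by simp
  qed
  show ?thesis
  proof
    fix t assume t: "t \<in> {x0..s1}"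
    then show "F t \<noteq> 0 \<and> Q t \<ge> Q x0 - D * (t - x0)" using nozero step1[OF t] by auto
  qed
qed

lemma cont_left:
  fixes F Q F' Q' :: "real \<Rightarrow> real"
  assumes x01: "s1 < x0" and cF: "continuous_on {s1..x0} F" and F0: "F x0 \<noteq> 0"
    and der: "\<And>t. t \<in> {s1..x0} \<Longrightarrow> F t \<noteq> 0 \<Longrightarrow> (F has_real_derivative F' t) (at t)
       \<and> (Q has_real_derivative Q' t) (at t) \<and> \<bar>Q' t\<bar> \<le> D \<and> Q t > 0 \<and> \<bar>F' t\<bar> * Q t \<le> E * \<bar>F t\<bar>"
    and small: "D * (x0 - s1) \<le> Q x0 / 2"
  shows "\<forall>t\<in>{s1..x0}. F t \<noteq> 0 \<and> Q t \<ge> Q x0 - D * (x0 - t)"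
proof -
  have cF': "continuous_on {-x0..-s1} (\<lambda>t. F (- t))"
    by (rule continuous_on_compose2[OF cF]) (auto intro!: continuous_intros)
  have der': "((\<lambda>t. F (- t)) has_real_derivative - F' (- t)) (at t)
       \<and> ((\<lambda>t. Q (- t)) has_real_derivative - Q' (- t)) (at t) \<and> \<bar>- Q' (- t)\<bar> \<le> D \<and> Q (- t) > 0
       \<and> \<bar>- F' (- t)\<bar> * Q (- t) \<le> E * \<bar>F (- t)\<bar>"
    if "t \<in> {-x0..-s1}" "F (- t) \<noteq> 0" for t
  proof -
    have "-t \<in> {s1..x0}" using that by auto
    note d = der[OF this that(2)]
    then show ?thesis using DERIV_mirror[of F "F' (- t)" t] DERIV_mirror[of Q "Q' (- t)" t] by auto
  qed
  have "\<forall>t\<in>{-x0..-s1}. F (- t) \<noteq> 0 \<and> Q (- t) \<ge> Q (- (- x0)) - D * (t - (- x0))"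
    by (rule cont_right[where F' = "\<lambda>t. - F' (- t)" and Q' = "\<lambda>t. - Q' (- t)" and E = E])
       (use x01 cF' F0 der' small in auto)
  note A = this
  show ?thesis
  proof
    fix t assume "t \<in> {s1..x0}"
    then have "-t \<in> {-x0..-s1}" by auto
    from bspec[OF A this] show "F t \<noteq> 0 \<and> Q t \<ge> Q x0 - D * (x0 - t)" by (simp add: algebra_simps)
  qed
qed

lemma alg1:
  fixes y A B C M :: real
  assumes A: "A \<noteq> 0" and y: "y > 0" and H: "\<bar>y\<^sup>2 * A * C / (A\<^sup>2 + y\<^sup>2 * B\<^sup>2)\<bar> \<le> M"
  shows "\<bar>y * ((B + y * C) / A - y * B * B / A\<^sup>2)\<bar> \<le> (M + 2) * (1 + (y * B / A)\<^sup>2)"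
proof -
  define u where "u = y * B / A"
  define Hv where "Hv = y\<^sup>2 * A * C / (A\<^sup>2 + y\<^sup>2 * B\<^sup>2)"
  have pos: "A\<^sup>2 + y\<^sup>2 * B\<^sup>2 > 0" using A by (simp add: add_pos_nonneg)
  have e1: "y * ((B + y * C) / A - y * B * B / A\<^sup>2) = u + y\<^sup>2 * C / A - u\<^sup>2"
    using A by (simp add: u_def field_simps power2_eq_square)
  have o: "1 + u\<^sup>2 = (A\<^sup>2 + y\<^sup>2 * B\<^sup>2) / A\<^sup>2"
    using A by (simp add: u_def field_simps power2_eq_square)
  have "Hv * (1 + u\<^sup>2) = y\<^sup>2 * A * C / A\<^sup>2"
    unfolding o Hv_def using pos by simp
  also have "\<dots> = y\<^sup>2 * C / A" using A by (simp add: power2_eq_square)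
  finally have e2: "y\<^sup>2 * C / A = Hv * (1 + u\<^sup>2)" by simp
  have u1: "\<bar>u\<bar> \<le> 1 + u\<^sup>2"
  proof -
    have "0 \<le> (\<bar>u\<bar> - 1)\<^sup>2" by simp
    also have "(\<bar>u\<bar> - 1)\<^sup>2 = u\<^sup>2 - 2 * \<bar>u\<bar> + 1"
      by (simp add: power2_eq_square algebra_simps)
    finally show ?thesis by linarith
  qed
  have "\<bar>u + Hv * (1 + u\<^sup>2) - u\<^sup>2\<bar> \<le> \<bar>u\<bar> + \<bar>Hv\<bar> * (1 + u\<^sup>2) + u\<^sup>2"
  proof -
    have "\<bar>Hv * (1 + u\<^sup>2)\<bar> = \<bar>Hv\<bar> * (1 + u\<^sup>2)" by (simp add: abs_mult)
    moreover have "\<bar>u + Hv * (1 + u\<^sup>2) - u\<^sup>2\<bar> \<le> \<bar>u\<bar> + \<bar>Hv * (1 + u\<^sup>2)\<bar> + \<bar>u\<^sup>2\<bar>"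
      by arith
    ultimately show ?thesis by simp
  qed
  also have "\<dots> \<le> (1 + u\<^sup>2) + M * (1 + u\<^sup>2) + (1 + u\<^sup>2)"
    using u1 H by (intro add_mono mult_right_mono) (auto simp: Hv_def)
  also have "\<dots> = (M + 2) * (1 + u\<^sup>2)" by (simp add: algebra_simps)
  finally show ?thesis using e1 e2 by (simp add: u_def)
qed

lemma alg2:
  fixes y u u' sq K :: real
  assumes "sq > 0" "sq\<^sup>2 = 1 + u\<^sup>2" "\<bar>y * u'\<bar> \<le> K * (1 + u\<^sup>2)" "y > 0"
  shows "\<bar>- (u * u') / sq ^ 3\<bar> \<le> K / y"
proof -
  have u: "\<bar>u\<bar> \<le> sq" using assms(1,2)
    by (metis abs_of_pos le_add_same_cancel2 real_sqrt_abs real_sqrt_le_mono zero_le_one)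
  have "\<bar>u * u'\<bar> * y = \<bar>u\<bar> * \<bar>y * u'\<bar>" using assms(4) by (simp add: abs_mult)
  also have "\<dots> \<le> sq * (K * sq\<^sup>2)" using u assms by (intro mult_mono) auto
  finally have "\<bar>u * u'\<bar> * y \<le> K * sq ^ 3" by (simp add: power2_eq_square power3_eq_cube algebra_simps)
  then show ?thesis using assms(1,4) by (simp add: abs_divide field_simps)
qed

lemma q_deriv:
  fixes f f1 :: "real \<Rightarrow> real" and f2 t :: real
  assumes d1: "(f has_real_derivative f1 t) (at t)" and d2: "(f1 has_real_derivative f2) (at t)"
    and nz: "f t \<noteq> 0"
  shows "((\<lambda>y. inverse (sqrt (1 + (y * f1 y / f y)\<^sup>2))) has_real_derivative
     - ((t * f1 t / f t) * ((f1 t + t * f2) / f t - t * f1 t * f1 t / (f t)\<^sup>2)) / (sqrt (1 + (t * f1 t / f t)\<^sup>2)) ^ 3) (at t)"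
proof -
  define u where "u = (\<lambda>y. y * f1 y / f y)"
  define u' where "u' = (f1 t + t * f2) / f t - t * f1 t * f1 t / (f t)\<^sup>2"
  have "((\<lambda>y. y * f1 y) has_real_derivative 1 * f1 t + f2 * t) (at t)"
    by (rule DERIV_mult[OF DERIV_ident d2])
  from DERIV_divide[OF this d1 nz]
  have du: "(u has_real_derivative u') (at t)" unfolding u_def u'_def
    by (rule DERIV_cong) (use nz in \<open>simp add: field_simps power2_eq_square\<close>)
  define w where "w = 1 + (u t)\<^sup>2"
  have wpos: "w > 0" unfolding w_def by (simp add: add_pos_nonneg)
  have dw: "((\<lambda>y. 1 + (u y)\<^sup>2) has_real_derivative 0 + of_nat 2 * (u' * u t ^ (2 - Suc 0))) (at t)"
    by (rule DERIV_add[OF DERIV_const DERIV_power[OF du]])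
  have dsq: "((\<lambda>y. sqrt (1 + (u y)\<^sup>2)) has_real_derivative inverse (sqrt w) / 2 * (0 + of_nat 2 * (u' * u t ^ (2 - Suc 0)))) (at t)"
    using DERIV_chain2[OF DERIV_real_sqrt[OF wpos[unfolded w_def]] dw] unfolding w_def by simp
  have sqpos: "sqrt w > 0" using wpos by simp
  have dq: "((\<lambda>y. inverse (sqrt (1 + (u y)\<^sup>2))) has_real_derivative
      - (inverse (sqrt w) / 2 * (0 + of_nat 2 * (u' * u t ^ (2 - Suc 0))) * inverse (sqrt (1 + (u t)\<^sup>2) ^ Suc (Suc 0)))) (at t)"
    by (rule DERIV_inverse_fun[OF dsq]) (use sqpos in \<open>simp add: w_def\<close>)
  have "- (inverse (sqrt w) / 2 * (0 + of_nat 2 * (u' * u t ^ (2 - Suc 0))) * inverse (sqrt (1 + (u t)\<^sup>2) ^ Suc (Suc 0)))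
      = - (u t * u') / (sqrt w) ^ 3"
    using sqpos unfolding w_def[symmetric] by (simp add: field_simps power3_eq_cube power2_eq_square)
  with dq show ?thesis unfolding u_def u'_def w_def by simp
qed

theorem proposition3:
  fixes f :: "real \<Rightarrow> real" and b :: real
  assumes "b > 0"
    and "real_analytic_on f {0<..<b}"
    and "\<exists>x\<in>{0<..<b}. f x \<noteq> 0"
    and "(kappa f \<longlongrightarrow> \<infinity>) (at_left b)"
    and "\<And>xs :: nat \<Rightarrow> real. (\<forall>j. xs j \<in> {0<..<b}) \<Longrightarrow> xs \<longlonglongrightarrow> 0 \<Longrightarrow>
           (\<lambda>j. reldist_set (xs j) {x\<in>{0<..<b}. f x = 0}) \<longlonglongrightarrow> 0 \<Longrightarrow>
           (\<lambda>j. kappa f (xs j)) \<longlonglongrightarrow> \<infinity>"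
    and "\<exists>C>0. Limsup (at_right 0) (\<lambda>x. ereal \<bar>Hfun f x\<bar>) \<le> ereal C
              \<and> Limsup (at_left b) (\<lambda>x. ereal \<bar>Hfun f x\<bar>) \<le> ereal C"
  shows "amenable_on f {0<..<b}"
proof -
  note b = assms(1) and an = assms(2) and ex = assms(3) and kb = assms(4) and lims = assms(6)
  obtain M where M: "M \<ge> 0" "\<And>y. y \<in> {0<..<b} \<Longrightarrow> f y \<noteq> 0 \<Longrightarrow> \<bar>Hfun f y\<bar> \<le> M"
    using H_global[OF b an ex lims] by blast
  define K where "K = M + 2"
  have K0: "K \<ge> 2" using M by (simp add: K_def)
  have dg: "\<And>y. y \<in> {0<..<b} \<Longrightarrow> (f has_real_derivative deriv f y) (at y)"
    and dg2: "\<And>y. y \<in> {0<..<b} \<Longrightarrow> (deriv f has_real_derivative deriv (deriv f) y) (at y)"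
    using derivs_global[OF an] by blast+
  define u where "u y = y * deriv f y / f y" for y
  define sq where "sq y = sqrt (1 + (u y)\<^sup>2)" for y
  define q where "q y = inverse (sq y)" for y
  define q' where "q' t = - (u t * ((deriv f t + t * deriv (deriv f) t) / f t - t * deriv f t * deriv f t / (f t)\<^sup>2)) / (sq t) ^ 3" for t
  have sqpos: "sq y > 0" for y unfolding sq_def by (simp add: add_pos_nonneg)
  have sq2: "(sq y)\<^sup>2 = 1 + (u y)\<^sup>2" for y unfolding sq_def by (simp add: add_nonneg_nonneg)
  have usq: "\<bar>u y\<bar> \<le> sq y" for y unfolding sq_def
    by (metis real_sqrt_abs real_sqrt_le_mono le_add_same_cancel2 zero_le_one)
  have squ: "sq y \<le> 1 + \<bar>u y\<bar>" for y
  proof -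
    have "(sq y)\<^sup>2 \<le> (1 + \<bar>u y\<bar>)\<^sup>2" unfolding sq2 by (simp add: power2_eq_square algebra_simps)
    then show ?thesis by (rule power2_le_imp_le) simp
  qed
  have qpos: "q y > 0" for y using sqpos by (simp add: q_def)
  have qfun: "q = (\<lambda>y. inverse (sqrt (1 + (y * deriv f y / f y)\<^sup>2)))"
    by (simp add: fun_eq_iff q_def sq_def u_def)
  have qd: "(q has_real_derivative q' t) (at t)" if "t \<in> {0<..<b}" "f t \<noteq> 0" for t
    unfolding qfun q'_def sq_def u_def by (rule q_deriv[OF dg[OF that(1)] dg2[OF that(1)] that(2)])
  have qb: "\<bar>q' t\<bar> \<le> K / t" if t: "t \<in> {0<..<b}" "f t \<noteq> 0" for t
  proof -
    have "\<bar>t\<^sup>2 * f t * deriv (deriv f) t / ((f t)\<^sup>2 + t\<^sup>2 * (deriv f t)\<^sup>2)\<bar> \<le> M"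
      using M(2)[OF t] unfolding Hfun_def .
    from alg1[OF t(2) _ this] t
    have "\<bar>t * ((deriv f t + t * deriv (deriv f) t) / f t - t * deriv f t * deriv f t / (f t)\<^sup>2)\<bar> \<le> K * (1 + (u t)\<^sup>2)"
      by (simp add: K_def u_def)
    from alg2[OF sqpos sq2 this] t show ?thesis by (simp add: q'_def)
  qed
  have fq: "\<bar>deriv f t\<bar> * q t \<le> (1 / t) * \<bar>f t\<bar>" if "t > 0" "f t \<noteq> 0" for t
  proof -
    have "t * \<bar>deriv f t\<bar> / \<bar>f t\<bar> \<le> sq t" using usq[of t] that by (simp add: u_def abs_mult abs_divide)
    then have "t * \<bar>deriv f t\<bar> \<le> sq t * \<bar>f t\<bar>" using that by (simp add: field_simps)
    then show ?thesis using that sqpos[of t] by (simp add: q_def field_simps)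
  qed
  have kap: "kappa f t = ereal \<bar>u t\<bar>" if "t > 0" "f t \<noteq> 0" for t
    using that by (simp add: kappa_def u_def abs_mult abs_divide)
  have DH: "(f has_real_derivative deriv f t) (at t) \<and> (q has_real_derivative q' t) (at t)
      \<and> \<bar>q' t\<bar> \<le> K / lo \<and> q t > 0 \<and> \<bar>deriv f t\<bar> * q t \<le> (1 / lo) * \<bar>f t\<bar>"
    if "0 < lo" "lo \<le> t" "t \<in> {0<..<b}" "f t \<noteq> 0" for lo t
  proof (intro conjI)
    show "(f has_real_derivative deriv f t) (at t)" using dg that by blast
    show "(q has_real_derivative q' t) (at t)" using qd that by blast
    have "K / t \<le> K / lo" by (rule divide_left_mono) (use that K0 in auto)
    then show "\<bar>q' t\<bar> \<le> K / lo" using qb[OF that(3,4)] by linarith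
    show "q t > 0" by (rule qpos)
    have "(1 / t) * \<bar>f t\<bar> \<le> (1 / lo) * \<bar>f t\<bar>" using that by (intro mult_right_mono divide_left_mono) auto
    then show "\<bar>deriv f t\<bar> * q t \<le> (1 / lo) * \<bar>f t\<bar>" using fq[of t] that by auto
  qed
  have cont: "continuous_on {p..s} f" if "0 < p" "s < b" for p s
    using that by (intro continuous_at_imp_continuous_on ballI DERIV_isCont[OF dg]) auto
  define C where "C = 4 * K + 4"
  have C: "C > 0" "C \<ge> 12" "4 * K \<le> C" using K0 by (auto simp: C_def)
  show ?thesis unfolding amenable_on_def Let_def
  proof (intro exI[of _ C] conjI[OF C(1)] ballI impI conjI)
    fix x assume x: "x \<in> {0<..<b}" and kx: "kappa f x < \<infinity>"
    have fx: "f x \<noteq> 0" using kx x by (auto simp: kappa_def)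
    have mux: "mu f x = ereal (1 + \<bar>u x\<bar>)" using kap[of x] x fx by (simp add: mu_def)
    define \<delta> where "\<delta> = 1 / (C * (1 + \<bar>u x\<bar>))"
    have "C * 1 \<le> C * (1 + \<bar>u x\<bar>)" using C by (intro mult_left_mono) auto
    then have X: "C * (1 + \<bar>u x\<bar>) \<ge> 12" using C by linarith
    have \<delta>0: "\<delta> > 0" "\<delta> \<le> 1 / 2" using X by (auto simp: \<delta>_def field_simps)
    have qx: "q x \<ge> 1 / (1 + \<bar>u x\<bar>)" unfolding q_def using squ[of x] sqpos[of x]
      by (simp add: field_simps)
    have Kd: "2 * K * \<delta> \<le> q x / 2"
    proof -
      have "2 * K * \<delta> = (2 * K / C) * (1 / (1 + \<bar>u x\<bar>))" by (simp add: \<delta>_def)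
      also have "\<dots> \<le> (1 / 2) * (1 / (1 + \<bar>u x\<bar>))"
        using C by (intro mult_right_mono) (auto simp: field_simps)
      also have "\<dots> \<le> q x / 2" using qx by linarith
      finally show ?thesis .
    qed
    have key: "y \<in> {0<..<b} \<and> f y \<noteq> 0 \<and> q y \<ge> q x / 2" if y: "reldist y x < ereal \<delta>" for y
    proof -
      have yx: "y * x > 0" and ly: "\<bar>ln (x / y)\<bar> < \<delta>"
        using y x by (auto simp: reldist_def split: if_splits)
      have y0: "y > 0" using yx x by (simp add: zero_less_mult_iff)
      consider "y = x" | "y > x" | "y < x" by linarith
      then show ?thesis
      proof cases
        case 1 then show ?thesis using x fx qpos[of x] by auto
      next
        case 2
        have "ln x < ln y" using 2 x by simp
        then have "ln (y / x) < \<delta>" using ly y0 x by (simp add: ln_div abs_if split: if_splits)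
        moreover have "y / x = exp (ln (y / x))" using y0 x by simp
        ultimately have "y / x < exp \<delta>" by (metis exp_less_cancel_iff)
        also have "exp \<delta> \<le> 1 + 2 * \<delta>" using \<delta>0 by (intro real_exp_bound_lemma) auto
        finally have "y < x + 2 * \<delta> * x" using x by (simp add: field_simps)
        then have "y - x \<le> 2 * \<delta> * x" by linarith
        then have "K / x * (y - x) \<le> K / x * (2 * \<delta> * x)" by (rule mult_left_mono) (use K0 x in auto)
        also have "\<dots> = 2 * K * \<delta>" using x by simp
        finally have sm: "K / x * (y - x) \<le> q x / 2" using Kd by linarith
        have yb: "y < b"
        proof (rule ccontr)
          assume "\<not> y < b"
          have bnd: "kappa f s \<le> ereal (2 / q x)" if s: "s \<in> {x<..<b}" for s
          proof -
            have "K / x * (s - x) \<le> K / x * (y - x)"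
              by (rule mult_left_mono) (use s \<open>\<not> y < b\<close> x K0 in auto)
            then have sm': "K / x * (s - x) \<le> q x / 2" using sm by linarith
            have "\<forall>t\<in>{x..s}. f t \<noteq> 0 \<and> q t \<ge> q x - K / x * (t - x)"
              apply (rule cont_right[where F' = "deriv f" and Q' = q' and E = "1 / x"])
              subgoal using s by simp
              subgoal using cont[of x s] x s by simp
              subgoal by (rule fx)
              subgoal for t by (rule DH) (use x s in auto)
              subgoal by (rule sm')
              done
            then have "f s \<noteq> 0 \<and> q s \<ge> q x - K / x * (s - x)" using s by auto
            then have fs: "f s \<noteq> 0" and qs: "q s \<ge> q x / 2" using sm' by auto
            have "\<bar>u s\<bar> \<le> sq s" by (rule usq)
            also have "sq s = 1 / q s" by (simp add: q_def divide_inverse)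
            also have "1 / q s \<le> 2 / q x" using qs qpos[of s] qpos[of x] by (simp add: field_simps)
            finally show ?thesis using kap[OF _ fs] s x by simp
          qed
          have "eventually (\<lambda>s. ereal (2 / q x) < kappa f s) (at_left b)"
            using order_tendstoD(1)[OF kb] by simp
          then obtain b' where b': "b' < b" "\<And>s. s > b' \<Longrightarrow> s < b \<Longrightarrow> ereal (2 / q x) < kappa f s"
            unfolding eventually_at_left_field by auto
          define s where "s = (max x b' + b) / 2"
          have "s \<in> {x<..<b}" "s > b'" using x b' by (auto simp: s_def)
          then show False using bnd[of s] b'(2)[of s] by (simp add: not_less[symmetric])
        qed
        have "\<forall>t\<in>{x..y}. f t \<noteq> 0 \<and> q t \<ge> q x - K / x * (t - x)"
          apply (rule cont_right[where F' = "deriv f" and Q' = q' and E = "1 / x"])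
          subgoal using 2 by simp
          subgoal using cont[of x y] x yb by simp
          subgoal by (rule fx)
          subgoal for t by (rule DH) (use x yb in auto)
          subgoal by (rule sm)
          done
        then have "f y \<noteq> 0 \<and> q y \<ge> q x - K / x * (y - x)" using 2 by auto
        then show ?thesis using 2 x yb sm by auto
      next
        case 3
        have "ln (x / y) < \<delta>" using ly by linarith
        moreover have "x / y = exp (ln (x / y))" using y0 x by simp
        ultimately have "x / y < exp \<delta>" by (metis exp_less_cancel_iff)
        also have "exp \<delta> \<le> 1 + 2 * \<delta>" using \<delta>0 by (intro real_exp_bound_lemma) auto
        finally have "x < y + 2 * \<delta> * y" using y0 by (simp add: field_simps)
        then have "x - y \<le> 2 * \<delta> * y" by linarith
        then have "K / y * (x - y) \<le> K / y * (2 * \<delta> * y)" by (rule mult_left_mono) (use K0 y0 in auto)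
        also have "\<dots> = 2 * K * \<delta>" using y0 by simp
        finally have sm: "K / y * (x - y) \<le> q x / 2" using Kd by linarith
        have "\<forall>t\<in>{y..x}. f t \<noteq> 0 \<and> q t \<ge> q x - K / y * (x - t)"
          apply (rule cont_left[where F' = "deriv f" and Q' = q' and E = "1 / y"])
          subgoal using 3 by simp
          subgoal using cont[of y x] x y0 by simp
          subgoal by (rule fx)
          subgoal for t by (rule DH) (use x y0 in auto)
          subgoal by (rule sm)
          done
        then have "f y \<noteq> 0 \<and> q y \<ge> q x - K / y * (x - y)" using 3 by auto
        then show ?thesis using 3 x y0 sm by auto
      qed
    qed
    have rm: "real_of_ereal (mu f x) = 1 + \<bar>u x\<bar>" using mux by simp
    show "{y. reldist y x < ereal (1 / (C * real_of_ereal (mu f x)))} \<subseteq> {0<..<b}"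
      using key unfolding rm \<delta>_def[symmetric] by blast
      fix y assume "y \<in> {y. reldist y x < ereal (1 / (C * real_of_ereal (mu f x)))}"
      then have k: "y \<in> {0<..<b}" "f y \<noteq> 0" "q y \<ge> q x / 2" using key unfolding rm \<delta>_def[symmetric] by auto
      have muy: "mu f y = ereal (1 + \<bar>u y\<bar>)" using kap[of y] k by (simp add: mu_def)
      have "1 \<le> sq y" unfolding sq_def by (rule real_sqrt_ge_one) simp
      then have "1 + \<bar>u y\<bar> \<le> 2 * sq y" using usq[of y] by linarith
      also have "\<dots> = 2 / q y" by (simp add: q_def divide_inverse)
      also have "\<dots> \<le> 4 / q x" using k(3) qpos[of x] qpos[of y] by (simp add: field_simps)
      also have "\<dots> = 4 * sq x" by (simp add: q_def divide_inverse)
      also have "\<dots> \<le> C * (1 + \<bar>u x\<bar>)"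
      proof -
        have "4 * sq x \<le> 4 * (1 + \<bar>u x\<bar>)" using squ[of x] by simp
        also have "\<dots> \<le> C * (1 + \<bar>u x\<bar>)" by (rule mult_right_mono) (use C in auto)
        finally show ?thesis .
      qed
      finally show "mu f y \<le> ereal C * mu f x" unfolding muy mux by simp
  qed
qed

end
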